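(* For every MSyDS $\mathcal{S}$ with node set $V$ there is a single-layer SyDS with node set $V$ whose phase space is identical to the phase space of $\mathcal{S}$.
   Context: A multilayer synchronous dynamical system (MSyDS) $\mathcal{S}$ over $\mathbb{B}=\{0,1\}$ with $k\ge 1$ layers consists of: a finite node set $V$; undirected simple graphs $G_i=(V,E_i)$, $1\le i\le k$ (all layers share the node set $V$); for each layer $i$ and node $v$ a local function $f_{i,v}$ (an arbitrary Boolean function) with output in $\mathbb{B}$ whose inputs are the states of the nodes in the closed neighborhood of $v$ in $G_i$ ($v$ and its neighbors in $G_i$); and for each node $v$ a master function $\psi_v:\mathbb{B}^k\to\mathbb{B}$. A configuration is a map $\mathcal{C}:V\to\mathbb{B}$; its successor is $\mathcal{C}'$ with $\mathcal{C}'(v)=\psi_v(f_{1,v}(\mathcal{C}),\dots,f_{k,v}(\mathcal{C}))$ for all $v$ (synchronous update), where $f_{i,v}(\mathcal{C})$ is $f_{i,v}$ evaluated on the states in $\mathcal{C}$ of the closed neighborhood of $v$ in $G_i$. The phase space is the directed graph on all configurations with an arc from each configuration to its successor. A single-layer synchronous dynamical system (SyDS) over $\mathbb{B}$ consists of one undirected graph $G=(V,E)$ and, for each $v\in V$, a Boolean local function $f_v$ of the states of the closed neighborhood of $v$ in $G$; the successor of $\mathcal{C}$ is $\mathcal{C}'$ with $\mathcal{C}'(v)=f_v(\mathcal{C})$ for all $v$, and its phase space is defined in the same way. *)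

theory Defs
  imports Main
begin

(* Node set: the finite type 'v (V = UNIV).  Configurations: 'v \<Rightarrow> bool.
   A graph is a relation E :: 'v \<Rightarrow> 'v \<Rightarrow> bool. *)

definition simple_graph :: "('v \<Rightarrow> 'v \<Rightarrow> bool) \<Rightarrow> bool" where
  "simple_graph E \<longleftrightarrow> (\<forall>u v. E u v = E v u) \<and> (\<forall>v. \<not> E v v)"

definition closed_nbhd :: "('v \<Rightarrow> 'v \<Rightarrow> bool) \<Rightarrow> 'v \<Rightarrow> 'v set" where
  "closed_nbhd E v = {u. u = v \<or> E v u}"

definition local_fun :: "('v \<Rightarrow> 'v \<Rightarrow> bool) \<Rightarrow> 'v \<Rightarrow> (('v \<Rightarrow> bool) \<Rightarrow> bool) \<Rightarrow> bool" where
  "local_fun E v g \<longleftrightarrow>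
     (\<forall>C C'. (\<forall>u\<in>closed_nbhd E v. C u = C' u) \<longrightarrow> g C = g C')"

(* MSyDS with k layers indexed 0..<k: graphs E i, local functions f i v,
   master functions \<psi> v : B^k \<rightarrow> B (arguments as a bool list of length k). *)
definition is_msyds ::
  "nat \<Rightarrow> (nat \<Rightarrow> 'v \<Rightarrow> 'v \<Rightarrow> bool) \<Rightarrow> (nat \<Rightarrow> 'v \<Rightarrow> ('v \<Rightarrow> bool) \<Rightarrow> bool) \<Rightarrow> bool" where
  "is_msyds k E f \<longleftrightarrow> k \<ge> 1 \<and>
     (\<forall>i<k. simple_graph (E i) \<and> (\<forall>v. local_fun (E i) v (f i v)))"

definition msyds_step ::
  "nat \<Rightarrow> (nat \<Rightarrow> 'v \<Rightarrow> ('v \<Rightarrow> bool) \<Rightarrow> bool) \<Rightarrow> ('v \<Rightarrow> bool list \<Rightarrow> bool)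
   \<Rightarrow> ('v \<Rightarrow> bool) \<Rightarrow> ('v \<Rightarrow> bool)" where
  "msyds_step k f \<psi> C = (\<lambda>v. \<psi> v (map (\<lambda>i. f i v C) [0..<k]))"

definition is_syds :: "('v \<Rightarrow> 'v \<Rightarrow> bool) \<Rightarrow> ('v \<Rightarrow> ('v \<Rightarrow> bool) \<Rightarrow> bool) \<Rightarrow> bool" where
  "is_syds G g \<longleftrightarrow> simple_graph G \<and> (\<forall>v. local_fun G v (g v))"

definition syds_step :: "('v \<Rightarrow> ('v \<Rightarrow> bool) \<Rightarrow> bool) \<Rightarrow> ('v \<Rightarrow> bool) \<Rightarrow> ('v \<Rightarrow> bool)" where
  "syds_step g C = (\<lambda>v. g v C)"

definition phase_space :: "(('v \<Rightarrow> bool) \<Rightarrow> ('v \<Rightarrow> bool)) \<Rightarrow> (('v \<Rightarrow> bool) \<times> ('v \<Rightarrow> bool)) set" where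
  "phase_space step = {(C, step C) | C. True}"

end

theory Submission
  imports Defs
begin

theorem proposition6p1:
  fixes k :: nat
    and E :: "nat \<Rightarrow> 'v::finite \<Rightarrow> 'v \<Rightarrow> bool"
    and f :: "nat \<Rightarrow> 'v \<Rightarrow> ('v \<Rightarrow> bool) \<Rightarrow> bool"
    and \<psi> :: "'v \<Rightarrow> bool list \<Rightarrow> bool"
  assumes "is_msyds k E f"
  shows "\<exists>(G :: 'v \<Rightarrow> 'v \<Rightarrow> bool) (g :: 'v \<Rightarrow> ('v \<Rightarrow> bool) \<Rightarrow> bool).
           is_syds G g \<and> phase_space (syds_step g) = phase_space (msyds_step k f \<psi>)"
proof -
  have A: "simple_graph (E i)" if "i < k" for i
    using assms that unfolding is_msyds_def by simp
  have B: "local_fun (E i) v (f i v)" if "i < k" for i v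
    using assms that unfolding is_msyds_def by simp
  have Sym: "E i u w \<Longrightarrow> E i w u" if "i < k" for i u w
    using A[OF that] unfolding simple_graph_def by simp
  have Irr: "\<not> E i w w" if "i < k" for i w
    using A[OF that] unfolding simple_graph_def by simp
  define G where "G = (\<lambda>u w. \<exists>i<k. E i u w)"
  define g where "g = (\<lambda>v C. msyds_step k f \<psi> C v)"
  have sg: "simple_graph G"
    unfolding simple_graph_def
  proof (intro conjI allI)
    fix u w
    show "G u w = G w u" unfolding G_def using Sym by blast
  next
    fix w
    show "\<not> G w w" unfolding G_def using Irr by blast
  qed
  have lf: "local_fun G v (g v)" for v
    unfolding local_fun_def
  proof (intro allI impI)
    fix C C' :: "'v \<Rightarrow> bool"
    assume h: "\<forall>u\<in>closed_nbhd G v. C u = C' u"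
    have "f i v C = f i v C'" if "i < k" for i
    proof -
      have "\<forall>u\<in>closed_nbhd (E i) v. C u = C' u"
      proof
        fix u assume "u \<in> closed_nbhd (E i) v"
        then have "u = v \<or> E i v u" unfolding closed_nbhd_def by simp
        then have "u = v \<or> G v u" unfolding G_def using that by blast
        then have "u \<in> closed_nbhd G v" unfolding closed_nbhd_def by simp
        then show "C u = C' u" using h by blast
      qed
      then show ?thesis using B[OF that, of v] unfolding local_fun_def by blast
    qed
    then show "g v C = g v C'"
      unfolding g_def msyds_step_def by (intro arg_cong[where f="\<psi> v"] map_cong) auto
  qed
  have "syds_step g = msyds_step k f \<psi>"
    unfolding syds_step_def g_def by (rule ext) simp
  moreover have "is_syds G g" using sg lf unfolding is_syds_def by simp
  ultimately show ?thesis by (intro exI[of _ G] exI[of _ g]) simp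
qed

end
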